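(* Assume $\rho_1,\rho_2$ are strictly positive, $\rho_1(s,a)=\rho_1^{\mathcal S}(s)\pi_{b1}(a\mid s)$, $\gamma_1,\gamma_2\in[0,1)$, $\beta\ge0$, and $\|q_1^\star\|_\infty\le B_{Q1}$, $\|q_2^\star\|_\infty\le B_{Q2}$, $\|d^{P_2}_{\pi_2^\star,\rho_2}/\rho_2\|_\infty\le\kappa_2$, $\|d^{P_1}_{\mu,\rho_1}/\rho_1\|_\infty\le\kappa_1$, $\|d^{P_2}_{\pi_2^\star,\rho_2}/\rho_1\|_\infty\le\kappa_{12}$, $\|\mu/\pi_{b1}\|_\infty\le\kappa_{\mu\mid\pi_{b1}}$, $\|d^{P_2,\mathcal S}_{\pi_2^\star,\rho_2}/\rho_1^{\mathcal S}\|_\infty\le\kappa^{\mathcal S}_{12}$. Let $l_2^\star$, $l_{1,\rm mod}^\star$, $l_{1,\rm coup}^\star$ be the functions satisfying, for all $h$, $\langle l_2^\star,(I-\gamma_2P_2^{\pi_2^\star})h\rangle_{\rho_2}=\langle q_2^\star,h\rangle_{\rho_2}$; $\langle l_{1,\rm mod}^\star,(I-\gamma_1P_1^\mu)h\rangle_{\rho_1}=\langle q_1^\star,h\rangle_{\rho_1}$; $\langle l_{1,\rm coup}^\star,(I-\gamma_1P_1^\mu)h\rangle_{\rho_1}=\beta\langle q_1^\star,h\rangle_{\rho_1}+\langle l_2^\star,(I-\Pi_\mu)h\rangle_{\rho_2}$. Then these are uniquely determined and $$l_2^\star=\frac{(I-\gamma_2(P_2^{\pi_2^\star})^\top)^{-1}(\rho_2\odot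 q_2^\star)}{\rho_2},\quad l_{1,\rm mod}^\star=\frac{(I-\gamma_1(P_1^\mu)^\top)^{-1}(\rho_1\odot q_1^\star)}{\rho_1},$$ $$l_{1,\rm coup}^\star=\beta l_{1,\rm mod}^\star+l_{1,\rm cross}^\star,\qquad l_{1,\rm cross}^\star=\frac{(I-\gamma_1(P_1^\mu)^\top)^{-1}(I-\Pi_\mu)^\top(\rho_2\odot l_2^\star)}{\rho_1}.$$ Consequently $\|l_2^\star\|_\infty\le\frac{\kappa_2}{1-\gamma_2}B_{Q2}$, $\|l_{1,\rm mod}^\star\|_\infty\le\frac{\kappa_1}{1-\gamma_1}B_{Q1}$, and $$\|l_{1,\rm coup}^\star\|_\infty\le\beta\frac{\kappa_1}{1-\gamma_1}B_{Q1}+\frac{\kappa_1(\kappa_{12}+\kappa_{\mu\mid\pi_{b1}}\kappa_{12}^{\mathcal S})}{(1-\gamma_1)(1-\gamma_2)}B_{Q2}.$$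
   Context: Setup: $\mathcal S,\mathcal A$ finite; functions/measures on $\mathcal S\times\mathcal A$ are vectors; $\odot$ and division are pointwise; $K^\top$ denotes the transpose (Euclidean adjoint) of a linear operator $K$, acting on measures. $\langle f,h\rangle_\rho=\sum\rho fh$. $\rho_1,\rho_2$ are probability distributions on $\mathcal S\times\mathcal A$, $\rho_1^{\mathcal S}$ a distribution on $\mathcal S$, $\pi_{b1}$ a policy. $P_1,P_2$ transition kernels; $\mu$ anchor policy; $(\Pi_\mu q)(s,a)=\sum_{a'}\mu(a'\mid s)q(s,a')$; $(P_1^\mu q)(s,a)=\sum_{s'}P_1(s'\mid s,a)\sum_{a'}\mu(a'\mid s')q(s',a')$; $(P_2^\pi h)(s,a)=\sum_{s'}P_2(s'\mid s,a)\sum_{a'}\pi(a'\mid s')h(s',a')$. $q_1^\star,q_2^\star$ are given functions on $\mathcal S\times\mathcal A$ and $\pi_2^\star$ a given policy. Occupancies (state-action initial distribution): $d^{P_2}_{\pi,\rho_2}:=(1-\gamma_2)\sum_{t\ge0}\gamma_2^t((P_2^{\pi})^\top)^t\rho_2$, $d^{P_1}_{\mu,\rho_1}:=(1-\gamma_1)\sum_{t\ge0}\gamma_1^t((P_1^\mu)^\top)^t\rho_1$, and $d^{P_2,\mathcal S}_{\pi,\rho_2}(s):=\sum_a d^{P_2}_{\pi,\rho_2}(s,a)$. *)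

theory Defs
  imports "HOL-Analysis.Analysis"
begin

text \<open>Functions and measures on S x A
  are real-valued functions on 's \<times> 'a. Policies: 's \<Rightarrow> 'a \<Rightarrow> real (pol s a = pol(a|s)).
  Transition kernels: 's \<times> 'a \<Rightarrow> 's \<Rightarrow> real (P (s,a) s' = P(s'|s,a)).\<close>

definition is_dist :: "('x::finite \<Rightarrow> real) \<Rightarrow> bool" where
  "is_dist p \<longleftrightarrow> (\<forall>x. 0 \<le> p x) \<and> sum p UNIV = 1"

definition is_policy :: "('s \<Rightarrow> 'a::finite \<Rightarrow> real) \<Rightarrow> bool" where
  "is_policy pol \<longleftrightarrow> (\<forall>s. is_dist (pol s))"

definition is_kernel :: "('s \<times> 'a \<Rightarrow> 's::finite \<Rightarrow> real) \<Rightarrow> bool" where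
  "is_kernel P \<longleftrightarrow> (\<forall>sa. is_dist (P sa))"

definition Pi_op :: "('s \<Rightarrow> 'a::finite \<Rightarrow> real) \<Rightarrow> ('s \<times> 'a \<Rightarrow> real) \<Rightarrow> ('s \<times> 'a \<Rightarrow> real)" where
  "Pi_op mu q = (\<lambda>(s,a). \<Sum>a'\<in>UNIV. mu s a' * q (s,a'))"

definition P_op :: "('s \<times> 'a \<Rightarrow> 's::finite \<Rightarrow> real) \<Rightarrow> ('s \<Rightarrow> 'a::finite \<Rightarrow> real)
    \<Rightarrow> ('s \<times> 'a \<Rightarrow> real) \<Rightarrow> ('s \<times> 'a \<Rightarrow> real)" where
  "P_op P pol h = (\<lambda>sa. \<Sum>s'\<in>UNIV. P sa s' * (\<Sum>a'\<in>UNIV. pol s' a' * h (s',a')))"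

definition ip :: "('x::finite \<Rightarrow> real) \<Rightarrow> ('x \<Rightarrow> real) \<Rightarrow> ('x \<Rightarrow> real) \<Rightarrow> real" where
  "ip rho f h = (\<Sum>x\<in>UNIV. rho x * f x * h x)"

definition sup_norm :: "('x::finite \<Rightarrow> real) \<Rightarrow> real" where
  "sup_norm f = Max (range (\<lambda>x. \<bar>f x\<bar>))"

text \<open>Euclidean transpose (adjoint) of a linear operator K on functions on a finite set,
  acting on measures: (K^T m)(y) = sum_x m(x) (K e_y)(x).\<close>
definition transp :: "(('x::finite \<Rightarrow> real) \<Rightarrow> ('x \<Rightarrow> real)) \<Rightarrow> ('x \<Rightarrow> real) \<Rightarrow> ('x \<Rightarrow> real)" where
  "transp K m = (\<lambda>y. \<Sum>x\<in>UNIV. m x * K (\<lambda>z. if z = y then 1 else 0) x)"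

definition occ :: "real \<Rightarrow> (('x::finite \<Rightarrow> real) \<Rightarrow> ('x \<Rightarrow> real)) \<Rightarrow> ('x \<Rightarrow> real) \<Rightarrow> ('x \<Rightarrow> real)" where
  "occ gamma K rho = (\<lambda>x. (1 - gamma) * (\<Sum>t. gamma ^ t * ((transp K ^^ t) rho) x))"

definition marg :: "('s \<times> 'a::finite \<Rightarrow> real) \<Rightarrow> 's \<Rightarrow> real" where
  "marg d s = (\<Sum>a\<in>UNIV. d (s,a))"

text \<open>(I - gamma K^T)^{-1} v, as the unique solution w of w - gamma K^T w = v.\<close>
definition resolvent :: "real \<Rightarrow> (('x::finite \<Rightarrow> real) \<Rightarrow> ('x \<Rightarrow> real)) \<Rightarrow> ('x \<Rightarrow> real) \<Rightarrow> ('x \<Rightarrow> real)" where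
  "resolvent gamma K v = (THE w. (\<lambda>x. w x - gamma * transp K w x) = v)"

end

theory Submission
  imports Defs "HOL-Analysis.Analysis"
begin


definition Tm :: "('x::finite \<Rightarrow> 'x \<Rightarrow> real) \<Rightarrow> ('x \<Rightarrow> real) \<Rightarrow> ('x \<Rightarrow> real)" where
  "Tm M m = (\<lambda>y. \<Sum>x\<in>UNIV. m x * M x y)"

definition Ser :: "real \<Rightarrow> ('x::finite \<Rightarrow> 'x \<Rightarrow> real) \<Rightarrow> ('x \<Rightarrow> real) \<Rightarrow> ('x \<Rightarrow> real)" where
  "Ser g M m = (\<lambda>y. \<Sum>t. g ^ t * ((Tm M ^^ t) m y))"

definition stoch :: "('x::finite \<Rightarrow> 'x \<Rightarrow> real) \<Rightarrow> bool" where
  "stoch M \<longleftrightarrow> (\<forall>x y. 0 \<le> M x y) \<and> (\<forall>x. sum (M x) UNIV = 1)"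

lemma Tm_l1:
  assumes "stoch M"
  shows "(\<Sum>y\<in>UNIV. \<bar>Tm M m y\<bar>) \<le> (\<Sum>x\<in>UNIV. \<bar>m x\<bar>)"
proof -
  have "(\<Sum>y\<in>UNIV. \<bar>Tm M m y\<bar>) \<le> (\<Sum>y\<in>UNIV. \<Sum>x\<in>UNIV. \<bar>m x\<bar> * M x y)"
  proof (rule sum_mono)
    fix y
    have "\<bar>Tm M m y\<bar> \<le> (\<Sum>x\<in>UNIV. \<bar>m x * M x y\<bar>)" unfolding Tm_def by (rule sum_abs)
    also have "\<dots> = (\<Sum>x\<in>UNIV. \<bar>m x\<bar> * M x y)" using assms by (simp add: stoch_def abs_mult)
    finally show "\<bar>Tm M m y\<bar> \<le> (\<Sum>x\<in>UNIV. \<bar>m x\<bar> * M x y)" .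
  qed
  also have "\<dots> = (\<Sum>x\<in>UNIV. \<bar>m x\<bar> * sum (M x) UNIV)"
    by (subst sum.swap) (simp add: sum_distrib_left)
  also have "\<dots> = (\<Sum>x\<in>UNIV. \<bar>m x\<bar>)" using assms by (simp add: stoch_def)
  finally show ?thesis .
qed

lemma Tm_pow_l1:
  assumes "stoch M"
  shows "(\<Sum>y\<in>UNIV. \<bar>(Tm M ^^ t) m y\<bar>) \<le> (\<Sum>x\<in>UNIV. \<bar>m x\<bar>)"
proof (induction t)
  case 0 then show ?case by simp
next
  case (Suc t)
  then show ?case using Tm_l1[OF assms, of "(Tm M ^^ t) m"] by simp
qed

lemma Tm_pow_bound:
  assumes "stoch M"
  shows "\<bar>(Tm M ^^ t) m y\<bar> \<le> (\<Sum>x\<in>UNIV. \<bar>m x\<bar>)"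
proof -
  have "\<bar>(Tm M ^^ t) m y\<bar> \<le> (\<Sum>y\<in>UNIV. \<bar>(Tm M ^^ t) m y\<bar>)"
    by (rule member_le_sum) auto
  then show ?thesis using Tm_pow_l1[OF assms] by (meson order_trans)
qed

lemma Ser_summable:
  assumes "stoch M" "0 \<le> g" "g < 1"
  shows "summable (\<lambda>t. g ^ t * ((Tm M ^^ t) m y))"
proof (rule summable_comparison_test')
  show "summable (\<lambda>t. g ^ t * (\<Sum>x\<in>UNIV. \<bar>m x\<bar>))"
    by (rule summable_mult2) (use assms in simp)
  fix n :: nat
  show "norm (g ^ n * (Tm M ^^ n) m y) \<le> g ^ n * (\<Sum>x\<in>UNIV. \<bar>m x\<bar>)"
    using Tm_pow_bound[OF assms(1), of n m y] assms(2)
    by (simp add: abs_mult mult_left_mono)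
qed

lemma Tm_Ser:
  assumes "stoch M" "0 \<le> g" "g < 1"
  shows "Tm M (Ser g M m) y = (\<Sum>t. g ^ t * ((Tm M ^^ Suc t) m y))"
proof -
  have "Tm M (Ser g M m) y = (\<Sum>x\<in>UNIV. \<Sum>t. g ^ t * ((Tm M ^^ t) m x) * M x y)"
    unfolding Tm_def[of M "Ser g M m"] unfolding Ser_def
    by (rule sum.cong[OF refl], rule suminf_mult2, rule Ser_summable[OF assms])
  also have "\<dots> = (\<Sum>t. \<Sum>x\<in>UNIV. g ^ t * ((Tm M ^^ t) m x) * M x y)"
    by (rule suminf_sum[symmetric], rule summable_mult2, rule Ser_summable[OF assms])
  also have "\<dots> = (\<Sum>t. g ^ t * ((Tm M ^^ Suc t) m y))"
    by (simp add: Tm_def sum_distrib_left mult.assoc)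
  finally show ?thesis .
qed

lemma Ser_eq:
  assumes "stoch M" "0 \<le> g" "g < 1"
  shows "(\<lambda>x. Ser g M m x - g * Tm M (Ser g M m) x) = m"
proof
  fix y
  let ?f = "\<lambda>t. g ^ t * ((Tm M ^^ t) m y)"
  have s: "summable ?f" by (rule Ser_summable[OF assms])
  have "(\<Sum>t. ?f (Suc t)) = Ser g M m y - m y"
    using suminf_split_head[OF s] by (simp add: Ser_def)
  moreover have "(\<Sum>t. ?f (Suc t)) = g * (\<Sum>t. g ^ t * ((Tm M ^^ Suc t) m y))"
  proof -
    have "summable (\<lambda>t. g ^ t * ((Tm M ^^ Suc t) m y))"
      using Ser_summable[OF assms, of "Tm M m" y] by (simp add: funpow_swap1)
    then have "g * (\<Sum>t. g ^ t * ((Tm M ^^ Suc t) m y)) = (\<Sum>t. g * (g ^ t * ((Tm M ^^ Suc t) m y)))"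
      by (simp add: suminf_mult)
    then show ?thesis by (simp add: mult.assoc)
  qed
  ultimately show "Ser g M m y - g * Tm M (Ser g M m) y = m y"
    using Tm_Ser[OF assms] by simp
qed

lemma Tm_lin: "Tm M (\<lambda>x. a * u x + b * v x) = (\<lambda>y. a * Tm M u y + b * Tm M v y)"
  unfolding Tm_def by (auto simp: algebra_simps sum.distrib sum_distrib_left)

lemma uniq0:
  assumes "stoch M" "0 \<le> g" "g < 1" "(\<lambda>x. w x - g * Tm M w x) = (\<lambda>x. 0)"
  shows "w = (\<lambda>x. 0)"
proof -
  have e: "w x = g * Tm M w x" for x using fun_cong[OF assms(4), of x] by simp
  have "(\<Sum>x\<in>UNIV. \<bar>w x\<bar>) = (\<Sum>x\<in>UNIV. g * \<bar>Tm M w x\<bar>)"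
    using assms(2) by (subst e) (simp add: abs_mult)
  also have "\<dots> = g * (\<Sum>x\<in>UNIV. \<bar>Tm M w x\<bar>)" by (simp add: sum_distrib_left)
  also have "\<dots> \<le> g * (\<Sum>x\<in>UNIV. \<bar>w x\<bar>)" by (rule mult_left_mono[OF Tm_l1[OF assms(1)] assms(2)])
  finally have "(1 - g) * (\<Sum>x\<in>UNIV. \<bar>w x\<bar>) \<le> 0" by (simp add: algebra_simps)
  moreover have "0 \<le> (\<Sum>x\<in>UNIV. \<bar>w x\<bar>)" by (simp add: sum_nonneg)
  ultimately have "(\<Sum>x\<in>UNIV. \<bar>w x\<bar>) = 0" using assms(3)
    by (smt (verit) mult_pos_pos)
  then show ?thesis by (simp add: sum_nonneg_eq_0_iff fun_eq_iff)
qed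

lemma uniq:
  assumes "stoch M" "0 \<le> g" "g < 1"
    "(\<lambda>x. w x - g * Tm M w x) = v" "(\<lambda>x. w' x - g * Tm M w' x) = v"
  shows "w = w'"
proof -
  have "(\<lambda>x. (w x - w' x) - g * Tm M (\<lambda>x. w x - w' x) x) = (\<lambda>x. 0)"
  proof
    fix x
    have t: "Tm M (\<lambda>x. w x - w' x) x = Tm M w x - Tm M w' x" unfolding Tm_def by (simp add: left_diff_distrib sum_subtractf)
    show "(w x - w' x) - g * Tm M (\<lambda>x. w x - w' x) x = 0"
      unfolding t using fun_cong[OF assms(4), of x] fun_cong[OF assms(5), of x] by (simp add: algebra_simps)
  qed
  from uniq0[OF assms(1-3) this] show ?thesis by (auto simp: fun_eq_iff)
qed

definition Res :: "real \<Rightarrow> ('x::finite \<Rightarrow> 'x \<Rightarrow> real) \<Rightarrow> ('x \<Rightarrow> real) \<Rightarrow> ('x \<Rightarrow> real)" where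
  "Res g M v = (THE w. (\<lambda>x. w x - g * Tm M w x) = v)"

lemma Res_eq:
  assumes "stoch M" "0 \<le> g" "g < 1"
  shows "Res g M v = Ser g M v"
  unfolding Res_def
proof (rule the_equality)
  show "(\<lambda>x. Ser g M v x - g * Tm M (Ser g M v) x) = v" by (rule Ser_eq[OF assms])
  fix w assume "(\<lambda>x. w x - g * Tm M w x) = v"
  then show "w = Ser g M v" by (rule uniq[OF assms _ Ser_eq[OF assms]])
qed

lemma Res_char:
  assumes "stoch M" "0 \<le> g" "g < 1"
  shows "(\<lambda>x. w x - g * Tm M w x) = v \<longleftrightarrow> w = Res g M v"
  using uniq[OF assms _ Ser_eq[OF assms]] Ser_eq[OF assms] Res_eq[OF assms] by metis

lemma Res_lin:
  assumes "stoch M" "0 \<le> g" "g < 1"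
  shows "Res g M (\<lambda>x. a * u x + b * v x) = (\<lambda>y. a * Res g M u y + b * Res g M v y)"
proof -
  have "(\<lambda>x. (\<lambda>y. a * Res g M u y + b * Res g M v y) x - g * Tm M (\<lambda>y. a * Res g M u y + b * Res g M v y) x)
     = (\<lambda>x. a * u x + b * v x)"
  proof
    fix x
    have u: "Res g M u x - g * Tm M (Res g M u) x = u x"
      using Res_char[OF assms, of "Res g M u" u] by (metis fun_cong)
    have v: "Res g M v x - g * Tm M (Res g M v) x = v x"
      using Res_char[OF assms, of "Res g M v" v] by (metis fun_cong)
    show "(\<lambda>y. a * Res g M u y + b * Res g M v y) x - g * Tm M (\<lambda>y. a * Res g M u y + b * Res g M v y) x
      = a * u x + b * v x"
      using u v by (simp add: Tm_lin algebra_simps)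
  qed
  then show ?thesis using Res_char[OF assms] by metis
qed

lemma Tm_mono:
  assumes "stoch M" "\<And>x. u x \<le> v x"
  shows "Tm M u y \<le> Tm M v y"
  unfolding Tm_def using assms by (auto simp: stoch_def intro!: sum_mono mult_right_mono)

lemma Tm_pow_mono:
  assumes "stoch M" "\<And>x. u x \<le> v x"
  shows "(Tm M ^^ t) u y \<le> (Tm M ^^ t) v y"
  using assms(2) by (induction t arbitrary: y) (auto intro: Tm_mono[OF assms(1)])

lemma Res_mono:
  assumes "stoch M" "0 \<le> g" "g < 1" "\<And>x. u x \<le> v x"
  shows "Res g M u y \<le> Res g M v y"
  unfolding Res_eq[OF assms(1-3)] Ser_def
  by (rule suminf_le[OF _ Ser_summable[OF assms(1-3)] Ser_summable[OF assms(1-3)]])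
     (use assms in \<open>auto intro!: mult_left_mono Tm_pow_mono\<close>)


definition AJ :: "('s::finite \<Rightarrow> 'a::finite \<Rightarrow> real) \<Rightarrow> 's \<times> 'a \<Rightarrow> 's \<times> 'a \<Rightarrow> real" where
  "AJ mu x y = (if x = y then 1 else 0) - (if fst x = fst y then mu (fst x) (snd y) else 0)"
lemma sum_pair: "(\<Sum>y\<in>UNIV. f y) = (\<Sum>s\<in>UNIV. \<Sum>a\<in>UNIV. f (s, a))"
  for f :: "'s::finite \<times> 'a::finite \<Rightarrow> real"
  by (simp add: UNIV_Times_UNIV[symmetric] sum.cartesian_product del: UNIV_Times_UNIV)
lemma sum_fst: "(\<Sum>y\<in>UNIV. if s = fst y then g y else 0) = (\<Sum>a\<in>UNIV. g (s, a))"
  for g :: "'s::finite \<times> 'a::finite \<Rightarrow> real"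
proof -
  have "(\<Sum>y\<in>UNIV. if s = fst y then g y else 0) = (\<Sum>sa\<in>UNIV. if s = sa then (\<Sum>a\<in>UNIV. g (sa, a)) else 0)"
    by (subst sum_pair) (rule sum.cong; simp)
  then show ?thesis by simp
qed
lemma sum_fst': "(\<Sum>y\<in>UNIV. if fst y = s then g y else 0) = (\<Sum>a\<in>UNIV. g (s, a))"
  for g :: "'s::finite \<times> 'a::finite \<Rightarrow> real"
  using sum_fst[of s g] by (simp add: eq_commute)
lemma J_pt: "(\<Sum>y\<in>UNIV. AJ mu (s,a) y * h y) = h (s,a) - (\<Sum>a'\<in>UNIV. mu s a' * h (s,a'))"
  unfolding AJ_def
  by (simp add: left_diff_distrib sum_subtractf if_distrib[of "\<lambda>u. u * _"] sum_fst cong: if_cong)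
lemma Tm_AJ: "Tm (AJ mu) m (s,a) = m (s,a) - mu s a * (\<Sum>a0\<in>UNIV. m (s, a0))"
  unfolding Tm_def AJ_def
  by (simp add: right_diff_distrib sum_subtractf if_distrib[of "\<lambda>u. _ * u"] sum_distrib_left
      sum_fst sum_fst' mult.commute cong: if_cong)


definition MP :: "('s \<times> 'a \<Rightarrow> 's::finite \<Rightarrow> real) \<Rightarrow> ('s \<Rightarrow> 'a::finite \<Rightarrow> real) \<Rightarrow> 's \<times> 'a \<Rightarrow> 's \<times> 'a \<Rightarrow> real" where
  "MP P pol x y = P x (fst y) * pol (fst y) (snd y)"

lemma stoch_MP: "is_kernel P \<Longrightarrow> is_policy pol \<Longrightarrow> stoch (MP P pol)"
  unfolding stoch_def MP_def is_kernel_def is_policy_def is_dist_def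
  by (auto simp: sum_pair sum_distrib_left[symmetric])

lemma P_op_mat: "P_op P pol h x = (\<Sum>y\<in>UNIV. MP P pol x y * h y)"
  unfolding P_op_def MP_def
  by (subst sum_pair) (simp add: sum_distrib_left mult.assoc)

lemma transp_P: "transp (P_op P pol) = Tm (MP P pol)" for P :: "'s::finite \<times> 'a::finite \<Rightarrow> 's \<Rightarrow> real"
proof (rule ext, rule ext)
  fix m and y :: "'s::finite \<times> 'a::finite"
  have "P_op P pol (\<lambda>z. if z = y then 1 else 0) x = MP P pol x y" for x
    unfolding P_op_mat by (simp add: if_distrib cong: if_cong)
  then show "transp (P_op P pol) m y = Tm (MP P pol) m y"
    unfolding transp_def Tm_def by simp
qed

lemma resolvent_eq: "resolvent g (P_op P pol) v = Res g (MP P pol) v"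
  unfolding resolvent_def Res_def transp_P ..

lemma occ_eq:
  assumes "is_kernel P" "is_policy pol" "0 \<le> g" "g < 1"
  shows "Res g (MP P pol) rho x = occ g (P_op P pol) rho x / (1 - g)"
  using assms unfolding occ_def transp_P Res_eq[OF stoch_MP[OF assms(1,2)] assms(3,4)] Ser_def
  by simp


lemma J_mat: "h x - Pi_op mu h x = (\<Sum>y\<in>UNIV. AJ mu x y * h y)"
  by (cases x) (simp add: J_pt Pi_op_def)

lemma transp_J: "transp (\<lambda>h y. h y - Pi_op mu h y) = Tm (AJ mu)" for mu :: "'s::finite \<Rightarrow> 'a::finite \<Rightarrow> real"
proof (rule ext, rule ext)
  fix m and y :: "'s::finite \<times> 'a::finite"
  have "(\<lambda>h y. h y - Pi_op mu h y) (\<lambda>z. if z = y then 1 else 0) x = AJ mu x y" for x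
    using J_mat[of "\<lambda>z. if z = y then 1 else 0" x mu] by (simp add: if_distrib cong: if_cong)
  then show "transp (\<lambda>h y. h y - Pi_op mu h y) m y = Tm (AJ mu) m y"
    unfolding transp_def Tm_def by simp
qed



lemma test_fun: "(\<forall>h. (\<Sum>y\<in>UNIV. f y * h y) = (\<Sum>y\<in>UNIV. g y * h y)) \<longleftrightarrow> f = g"
  for f g :: "'x::finite \<Rightarrow> real"
proof
  assume a: "\<forall>h. (\<Sum>y\<in>UNIV. f y * h y) = (\<Sum>y\<in>UNIV. g y * h y)"
  show "f = g"
  proof
    fix z
    show "f z = g z" using a[rule_format, of "\<lambda>y. if y = z then 1 else 0"]
      by (simp add: if_distrib cong: if_cong)
  qed
qed simp

lemma ip_swap: "ip rho m (\<lambda>x. \<Sum>y\<in>UNIV. A x y * h y) = (\<Sum>y\<in>UNIV. Tm A (\<lambda>x. rho x * m x) y * h y)"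
  unfolding ip_def Tm_def sum_distrib_left sum_distrib_right
  by (subst sum.swap) (simp add: mult_ac)

lemma ip_lin: "ip rho l (\<lambda>x. h x - g * (\<Sum>y\<in>UNIV. M x y * h y))
   = (\<Sum>y\<in>UNIV. (rho y * l y - g * Tm M (\<lambda>x. rho x * l x) y) * h y)"
proof -
  have "ip rho l (\<lambda>x. h x - g * (\<Sum>y\<in>UNIV. M x y * h y))
      = ip rho l h - g * ip rho l (\<lambda>x. \<Sum>y\<in>UNIV. M x y * h y)"
    unfolding ip_def by (simp add: algebra_simps sum_subtractf sum_distrib_left)
  also have "\<dots> = (\<Sum>y\<in>UNIV. (rho y * l y - g * Tm M (\<lambda>x. rho x * l x) y) * h y)"
    unfolding ip_swap by (simp add: ip_def algebra_simps sum_subtractf sum_distrib_left)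
  finally show ?thesis .
qed

lemma char_gen:
  assumes "stoch M" "0 \<le> g" "g < 1" "\<forall>x. rho x > 0"
  shows "(\<forall>h. ip rho l (\<lambda>x. h x - g * (\<Sum>y\<in>UNIV. M x y * h y)) = (\<Sum>y\<in>UNIV. c y * h y))
     \<longleftrightarrow> l = (\<lambda>x. Res g M c x / rho x)"
proof -
  have "(\<forall>h. ip rho l (\<lambda>x. h x - g * (\<Sum>y\<in>UNIV. M x y * h y)) = (\<Sum>y\<in>UNIV. c y * h y))
     \<longleftrightarrow> (\<lambda>y. rho y * l y - g * Tm M (\<lambda>x. rho x * l x) y) = c"
    unfolding ip_lin by (rule test_fun)
  also have "\<dots> \<longleftrightarrow> (\<lambda>x. rho x * l x) = Res g M c"
    using Res_char[OF assms(1-3), of "\<lambda>x. rho x * l x" c] by simp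
  also have "\<dots> \<longleftrightarrow> l = (\<lambda>x. Res g M c x / rho x)"
  proof -
    have nz: "\<And>x. rho x \<noteq> 0" using assms(4) by (metis less_irrefl)
    show ?thesis using nz by (auto simp: fun_eq_iff field_simps)
  qed
  finally show ?thesis .
qed

lemma Res_scale:
  assumes "stoch M" "0 \<le> g" "g < 1"
  shows "Res g M (\<lambda>x. a * u x) = (\<lambda>y. a * Res g M u y)"
  using Res_lin[OF assms, of a u 0 u] by simp

lemma Res_bound:
  assumes "stoch M" "0 \<le> g" "g < 1" "\<And>x. \<bar>v x\<bar> \<le> c * rho x"
  shows "\<bar>Res g M v x\<bar> \<le> c * Res g M rho x"
proof -
  have "Res g M v x \<le> Res g M (\<lambda>x. c * rho x) x"
    by (rule Res_mono[OF assms(1-3)]) (use assms(4) in \<open>auto simp: abs_le_iff\<close>)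
  moreover have "Res g M (\<lambda>x. (-1) * v x) x \<le> Res g M (\<lambda>x. c * rho x) x"
    by (rule Res_mono[OF assms(1-3)]) (use assms(4) in \<open>auto simp: abs_le_iff\<close>)
  ultimately show ?thesis unfolding Res_scale[OF assms(1-3)] by simp
qed

lemma sup_norm_ge: "\<bar>f x\<bar> \<le> sup_norm f" for f :: "'x::finite \<Rightarrow> real"
  unfolding sup_norm_def by (rule Max_ge) auto

lemma sup_norm_le: "(\<And>x. \<bar>f x\<bar> \<le> c) \<Longrightarrow> sup_norm f \<le> c" for f :: "'x::finite \<Rightarrow> real"
  unfolding sup_norm_def by (rule Max.boundedI) auto

lemma main_bound:
  assumes "is_kernel P" "is_policy pol" "0 \<le> g" "g < 1" "\<forall>x. rho x > 0"
    "\<And>x. \<bar>v x\<bar> \<le> c * rho x" "0 \<le> c"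
    "sup_norm (\<lambda>x. occ g (P_op P pol) rho x / rho x) \<le> k"
  shows "\<bar>Res g (MP P pol) v x / rho x\<bar> \<le> c * k / (1 - g)"
proof -
  note st = stoch_MP[OF assms(1,2)]
  have r: "rho x > 0" using assms(5) by blast
  have "\<bar>Res g (MP P pol) v x / rho x\<bar> = \<bar>Res g (MP P pol) v x\<bar> / rho x" using r by simp
  also have "\<dots> \<le> c * Res g (MP P pol) rho x / rho x"
    using Res_bound[OF st assms(3,4) assms(6)] r by (simp add: divide_right_mono)
  also have "\<dots> = c * (occ g (P_op P pol) rho x / rho x) / (1 - g)"
    unfolding occ_eq[OF assms(1-4)] by simp
  also have "\<dots> \<le> c * k / (1 - g)"
  proof -
    have "occ g (P_op P pol) rho x / rho x \<le> k"
      using sup_norm_ge[of "\<lambda>x. occ g (P_op P pol) rho x / rho x" x] assms(8) by linarith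
    then show ?thesis using assms(3,4,7) by (intro divide_right_mono mult_left_mono) auto
  qed
  finally show ?thesis .
qed




theorem proposition3p4:
  fixes rho1 rho2 :: "'s::finite \<times> 'a::finite \<Rightarrow> real"
    and rho1S :: "'s \<Rightarrow> real"
    and pib1 mu pi2 :: "'s \<Rightarrow> 'a \<Rightarrow> real"
    and P1 P2 :: "'s \<times> 'a \<Rightarrow> 's \<Rightarrow> real"
    and q1 q2 :: "'s \<times> 'a \<Rightarrow> real"
    and gamma1 gamma2 beta BQ1 BQ2 kappa1 kappa2 kappa12 kappamu kappa12S :: real
  assumes rho1_dist: "is_dist rho1" and rho2_dist: "is_dist rho2"
    and rho1_pos: "\<forall>x. rho1 x > 0" and rho2_pos: "\<forall>x. rho2 x > 0"
    and rho1S_dist: "is_dist rho1S" and pib1_pol: "is_policy pib1"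
    and rho1_fact: "\<forall>s a. rho1 (s,a) = rho1S s * pib1 s a"
    and mu_pol: "is_policy mu" and pi2_pol: "is_policy pi2"
    and P1_ker: "is_kernel P1" and P2_ker: "is_kernel P2"
    and g1: "0 \<le> gamma1" "gamma1 < 1" and g2: "0 \<le> gamma2" "gamma2 < 1"
    and beta: "0 \<le> beta"
    and BQ1: "sup_norm q1 \<le> BQ1" and BQ2: "sup_norm q2 \<le> BQ2"
    and k2: "sup_norm (\<lambda>x. occ gamma2 (P_op P2 pi2) rho2 x / rho2 x) \<le> kappa2"
    and k1: "sup_norm (\<lambda>x. occ gamma1 (P_op P1 mu) rho1 x / rho1 x) \<le> kappa1"
    and k12: "sup_norm (\<lambda>x. occ gamma2 (P_op P2 pi2) rho2 x / rho1 x) \<le> kappa12"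
    and kmu: "sup_norm (\<lambda>(s,a). mu s a / pib1 s a) \<le> kappamu"
    and k12S: "sup_norm (\<lambda>s. marg (occ gamma2 (P_op P2 pi2) rho2) s / rho1S s) \<le> kappa12S"
  shows
    "let L2 = (\<lambda>x. resolvent gamma2 (P_op P2 pi2) (\<lambda>y. rho2 y * q2 y) x / rho2 x);
         L1mod = (\<lambda>x. resolvent gamma1 (P_op P1 mu) (\<lambda>y. rho1 y * q1 y) x / rho1 x);
         L1cross = (\<lambda>x. resolvent gamma1 (P_op P1 mu)
                      (transp (\<lambda>h y. h y - Pi_op mu h y) (\<lambda>y. rho2 y * L2 y)) x / rho1 x);
         L1coup = (\<lambda>x. beta * L1mod x + L1cross x)
     in (\<forall>l. (\<forall>h. ip rho2 l (\<lambda>x. h x - gamma2 * P_op P2 pi2 h x) = ip rho2 q2 h)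
              \<longleftrightarrow> l = L2)
      \<and> (\<forall>l. (\<forall>h. ip rho1 l (\<lambda>x. h x - gamma1 * P_op P1 mu h x) = ip rho1 q1 h)
              \<longleftrightarrow> l = L1mod)
      \<and> (\<forall>l. (\<forall>h. ip rho1 l (\<lambda>x. h x - gamma1 * P_op P1 mu h x)
                   = beta * ip rho1 q1 h + ip rho2 L2 (\<lambda>x. h x - Pi_op mu h x))
              \<longleftrightarrow> l = L1coup)
      \<and> sup_norm L2 \<le> kappa2 / (1 - gamma2) * BQ2
      \<and> sup_norm L1mod \<le> kappa1 / (1 - gamma1) * BQ1
      \<and> sup_norm L1coup \<le> beta * (kappa1 / (1 - gamma1)) * BQ1
          + kappa1 * (kappa12 + kappamu * kappa12S) / ((1 - gamma1) * (1 - gamma2)) * BQ2"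
  proof -
  note st1 = stoch_MP[OF P1_ker mu_pol] and st2 = stoch_MP[OF P2_ker pi2_pol]
  define M1 where "M1 = MP P1 mu"
  define M2 where "M2 = MP P2 pi2"
  note st1 = st1[folded M1_def] and st2 = st2[folded M2_def]
  define L2 where "L2 = (\<lambda>x. resolvent gamma2 (P_op P2 pi2) (\<lambda>y. rho2 y * q2 y) x / rho2 x)"
  define L1mod where "L1mod = (\<lambda>x. resolvent gamma1 (P_op P1 mu) (\<lambda>y. rho1 y * q1 y) x / rho1 x)"
  define L1cross where "L1cross = (\<lambda>x. resolvent gamma1 (P_op P1 mu)
                      (transp (\<lambda>h y. h y - Pi_op mu h y) (\<lambda>y. rho2 y * L2 y)) x / rho1 x)"
  define L1coup where "L1coup = (\<lambda>x. beta * L1mod x + L1cross x)"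
  define m where "m = (\<lambda>y. rho2 y * L2 y)"
  have L2': "L2 = (\<lambda>x. Res gamma2 M2 (\<lambda>y. rho2 y * q2 y) x / rho2 x)"
    unfolding L2_def resolvent_eq M2_def ..
  have L1mod': "L1mod = (\<lambda>x. Res gamma1 M1 (\<lambda>y. rho1 y * q1 y) x / rho1 x)"
    unfolding L1mod_def resolvent_eq M1_def ..
  have L1cross': "L1cross = (\<lambda>x. Res gamma1 M1 (Tm (AJ mu) m) x / rho1 x)"
    unfolding L1cross_def resolvent_eq M1_def transp_J m_def ..
  have ipq: "ip rho q h = (\<Sum>y\<in>UNIV. (rho y * q y) * h y)" for rho q h :: "'s \<times> 'a \<Rightarrow> real"
    unfolding ip_def by (simp add: mult_ac)
  have Pm1: "P_op P1 mu h x = (\<Sum>y\<in>UNIV. M1 x y * h y)" for h x unfolding M1_def by (rule P_op_mat)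
  have Pm2: "P_op P2 pi2 h x = (\<Sum>y\<in>UNIV. M2 x y * h y)" for h x unfolding M2_def by (rule P_op_mat)
  have part1: "\<forall>l. (\<forall>h. ip rho2 l (\<lambda>x. h x - gamma2 * P_op P2 pi2 h x) = ip rho2 q2 h) \<longleftrightarrow> l = L2"
    unfolding Pm2 ipq[of rho2 q2] L2' by (intro allI char_gen[OF st2 g2 rho2_pos])
  have part2: "\<forall>l. (\<forall>h. ip rho1 l (\<lambda>x. h x - gamma1 * P_op P1 mu h x) = ip rho1 q1 h) \<longleftrightarrow> l = L1mod"
    unfolding Pm1 ipq[of rho1 q1] L1mod' by (intro allI char_gen[OF st1 g1 rho1_pos])
  have rhs3: "beta * ip rho1 q1 h + ip rho2 L2 (\<lambda>x. h x - Pi_op mu h x)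
      = (\<Sum>y\<in>UNIV. (beta * (rho1 y * q1 y) + 1 * Tm (AJ mu) m y) * h y)" for h
    unfolding J_mat ip_swap ipq[of rho1 q1] m_def by (simp add: algebra_simps sum.distrib sum_distrib_left)
  have coup: "L1coup = (\<lambda>x. Res gamma1 M1 (\<lambda>y. beta * (rho1 y * q1 y) + 1 * Tm (AJ mu) m y) x / rho1 x)"
    unfolding L1coup_def L1mod' L1cross' Res_lin[OF st1 g1] by (simp add: add_divide_distrib)
  have part3: "\<forall>l. (\<forall>h. ip rho1 l (\<lambda>x. h x - gamma1 * P_op P1 mu h x)
                   = beta * ip rho1 q1 h + ip rho2 L2 (\<lambda>x. h x - Pi_op mu h x)) \<longleftrightarrow> l = L1coup"
    unfolding Pm1 rhs3 coup by (intro allI char_gen[OF st1 g1 rho1_pos])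
  
  have BQ1p: "0 \<le> BQ1" using sup_norm_ge[of q1] BQ1 by (meson abs_ge_zero order_trans)
  have BQ2p: "0 \<le> BQ2" using sup_norm_ge[of q2] BQ2 by (meson abs_ge_zero order_trans)
  have q1b: "\<bar>rho1 x * q1 x\<bar> \<le> BQ1 * rho1 x" for x
  proof -
    have r: "0 < rho1 x" using rho1_pos by blast
    have "\<bar>q1 x\<bar> \<le> BQ1" using sup_norm_ge[of q1 x] BQ1 by linarith
    from mult_right_mono[OF this less_imp_le[OF r]] r show ?thesis by (simp add: abs_mult mult.commute)
  qed
  have q2b: "\<bar>rho2 x * q2 x\<bar> \<le> BQ2 * rho2 x" for x
  proof -
    have r: "0 < rho2 x" using rho2_pos by blast
    have "\<bar>q2 x\<bar> \<le> BQ2" using sup_norm_ge[of q2 x] BQ2 by linarith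
    from mult_right_mono[OF this less_imp_le[OF r]] r show ?thesis by (simp add: abs_mult mult.commute)
  qed
  have b2: "\<bar>L2 x\<bar> \<le> BQ2 * kappa2 / (1 - gamma2)" for x
    unfolding L2' M2_def by (rule main_bound[OF P2_ker pi2_pol g2 rho2_pos q2b BQ2p k2])
  have b1: "\<bar>L1mod x\<bar> \<le> BQ1 * kappa1 / (1 - gamma1)" for x
    unfolding L1mod' M1_def by (rule main_bound[OF P1_ker mu_pol g1 rho1_pos q1b BQ1p k1])

  have r1: "0 < rho1 x" for x using rho1_pos by blast
  have r2: "0 < rho2 x" for x using rho2_pos by blast
  have Res2m: "m y = Res gamma2 M2 (\<lambda>y. rho2 y * q2 y) y" for y
    unfolding m_def L2' using r2[of y] by simp
  define D where "D = occ gamma2 (P_op P2 pi2) rho2"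
  define K where "K = BQ2 / (1 - gamma2)"
  have Kp: "0 \<le> K" unfolding K_def using BQ2p g2 by simp
  have mb: "\<bar>m y\<bar> \<le> K * D y" for y
  proof -
    have "\<bar>m y\<bar> \<le> BQ2 * Res gamma2 M2 rho2 y"
      unfolding Res2m by (rule Res_bound[OF st2 g2 q2b])
    also have "\<dots> = K * D y"
      unfolding M2_def occ_eq[OF P2_ker pi2_pol g2] K_def D_def by simp
    finally show ?thesis .
  qed
  have mu0: "0 \<le> mu s a" for s a using mu_pol unfolding is_policy_def is_dist_def by blast
  have pib0: "0 \<le> pib1 s a" for s a using pib1_pol unfolding is_policy_def is_dist_def by blast
  have rS0: "0 \<le> rho1S s" for s using rho1S_dist unfolding is_dist_def by blast
  have pos: "0 < rho1S s \<and> 0 < pib1 s a" for s a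
  proof -
    have "0 < rho1S s * pib1 s a" using r1[of "(s,a)"] rho1_fact by simp
    then have "rho1S s \<noteq> 0" "pib1 s a \<noteq> 0" by auto
    then show ?thesis using rS0[of s] pib0[of s a] by simp
  qed
  have k12p: "0 \<le> kappa12" using sup_norm_ge[of "\<lambda>x. occ gamma2 (P_op P2 pi2) rho2 x / rho1 x" undefined] k12 by linarith
  have k12Sp: "0 \<le> kappa12S" using sup_norm_ge[of "\<lambda>s. marg (occ gamma2 (P_op P2 pi2) rho2) s / rho1S s" undefined] k12S by linarith
  have kmup: "0 \<le> kappamu" using sup_norm_ge[of "\<lambda>(s,a). mu s a / pib1 s a" undefined] kmu by linarith
  have Dk: "D x \<le> kappa12 * rho1 x" for x
  proof -
    have "D x / rho1 x \<le> kappa12" using sup_norm_ge[of "\<lambda>x. occ gamma2 (P_op P2 pi2) rho2 x / rho1 x" x] k12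
      unfolding D_def by linarith
    then show ?thesis using r1[of x] by (simp add: pos_divide_le_eq)
  qed
  have margk: "marg D s \<le> kappa12S * rho1S s" for s
  proof -
    have "marg D s / rho1S s \<le> kappa12S" using sup_norm_ge[of "\<lambda>s. marg (occ gamma2 (P_op P2 pi2) rho2) s / rho1S s" s] k12S
      unfolding D_def by linarith
    then show ?thesis using pos[of s undefined] by (simp add: pos_divide_le_eq)
  qed
  have muk: "mu s a \<le> kappamu * pib1 s a" for s a
  proof -
    have "mu s a / pib1 s a \<le> kappamu" using sup_norm_ge[of "\<lambda>(s,a). mu s a / pib1 s a" "(s,a)"] kmu mu0[of s a] pos[of s a]
      by simp
    then show ?thesis using pos[of s a] by (simp add: pos_divide_le_eq)
  qed
  define C where "C = K * (kappa12 + kappamu * kappa12S)"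
  have Cp: "0 \<le> C" unfolding C_def using Kp k12p k12Sp kmup by simp
  have cb: "\<bar>Tm (AJ mu) m x\<bar> \<le> C * rho1 x" for x
  proof -
    obtain s a where x: "x = (s, a)" by fastforce
    have sm: "\<bar>\<Sum>a0\<in>UNIV. m (s, a0)\<bar> \<le> K * marg D s"
    proof -
      have "\<bar>\<Sum>a0\<in>UNIV. m (s, a0)\<bar> \<le> (\<Sum>a0\<in>UNIV. \<bar>m (s, a0)\<bar>)" by (rule sum_abs)
      also have "\<dots> \<le> (\<Sum>a0\<in>UNIV. K * D (s, a0))" by (rule sum_mono) (rule mb)
      also have "\<dots> = K * marg D s" unfolding marg_def by (simp add: sum_distrib_left)
      finally show ?thesis .
    qed
    have "\<bar>Tm (AJ mu) m x\<bar> \<le> \<bar>m (s,a)\<bar> + mu s a * \<bar>\<Sum>a0\<in>UNIV. m (s, a0)\<bar>"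
      unfolding x Tm_AJ using mu0[of s a] by (metis abs_mult abs_of_nonneg abs_triangle_ineq4)
    also have "\<dots> \<le> K * D (s,a) + mu s a * (K * (kappa12S * rho1S s))"
    proof (rule add_mono)
      show "\<bar>m (s,a)\<bar> \<le> K * D (s,a)" by (rule mb)
      have "K * marg D s \<le> K * (kappa12S * rho1S s)" by (rule mult_left_mono[OF margk Kp])
      then show "mu s a * \<bar>\<Sum>a0\<in>UNIV. m (s, a0)\<bar> \<le> mu s a * (K * (kappa12S * rho1S s))"
        using sm mu0[of s a] by (meson mult_left_mono order_trans)
    qed
    also have "\<dots> \<le> K * (kappa12 * rho1 (s,a)) + (kappamu * pib1 s a) * (K * (kappa12S * rho1S s))"
    proof (rule add_mono)
      show "K * D (s,a) \<le> K * (kappa12 * rho1 (s,a))" by (rule mult_left_mono[OF Dk Kp])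
      show "mu s a * (K * (kappa12S * rho1S s)) \<le> (kappamu * pib1 s a) * (K * (kappa12S * rho1S s))"
        by (rule mult_right_mono[OF muk]) (use Kp k12Sp rS0[of s] in simp)
    qed
    also have "\<dots> = C * rho1 x"
      unfolding C_def x using rho1_fact by (simp add: algebra_simps)
    finally show ?thesis .
  qed
  have b3: "\<bar>L1cross x\<bar> \<le> C * kappa1 / (1 - gamma1)" for x
    unfolding L1cross' M1_def by (rule main_bound[OF P1_ker mu_pol g1 rho1_pos cb Cp k1])
  have part4: "sup_norm L2 \<le> kappa2 / (1 - gamma2) * BQ2"
    by (rule sup_norm_le) (use b2 in \<open>simp add: mult.commute\<close>)
  have part5: "sup_norm L1mod \<le> kappa1 / (1 - gamma1) * BQ1"
    by (rule sup_norm_le) (use b1 in \<open>simp add: mult.commute\<close>)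
  have part6: "sup_norm L1coup \<le> beta * (kappa1 / (1 - gamma1)) * BQ1
          + kappa1 * (kappa12 + kappamu * kappa12S) / ((1 - gamma1) * (1 - gamma2)) * BQ2"
  proof (rule sup_norm_le)
    fix x
    have "\<bar>L1coup x\<bar> \<le> beta * \<bar>L1mod x\<bar> + \<bar>L1cross x\<bar>"
      unfolding L1coup_def using beta by (simp add: abs_mult abs_triangle_ineq order_trans[OF abs_triangle_ineq])
    also have "\<dots> \<le> beta * (BQ1 * kappa1 / (1 - gamma1)) + C * kappa1 / (1 - gamma1)"
      by (rule add_mono[OF mult_left_mono[OF b1 beta] b3])
    also have "\<dots> = beta * (kappa1 / (1 - gamma1)) * BQ1
          + kappa1 * (kappa12 + kappamu * kappa12S) / ((1 - gamma1) * (1 - gamma2)) * BQ2"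
      unfolding C_def K_def using g1 g2 by (simp add: field_simps)
    finally show "\<bar>L1coup x\<bar> \<le> \<dots>" .
  qed
  have alt: "L1coup = (\<lambda>x. beta * L1mod x + resolvent gamma1 (P_op P1 mu)
                 (transp (\<lambda>h y. h y - Pi_op mu h y) (\<lambda>y. rho2 y * L2 y)) x / rho1 x)"
    unfolding L1coup_def L1cross_def ..
  show ?thesis
    unfolding Let_def L2_def[symmetric] L1mod_def[symmetric]
    unfolding alt[symmetric]
    using part1 part2 part3 part4 part5 part6 by blast
qed

end
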